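(* Let $m\in\mathbb{N}$, $d_1,\dots,d_m\in\mathbb{R}$, $\alpha_1,\dots,\alpha_m>0$, $\beta>0$ and $\nu\in\mathbb{R}$. Let $\gamma$ be a real root of the characteristic equation $$\sum_{i=1}^{m}\frac{d_i\,\Gamma(1+\gamma)}{\Gamma(1+\gamma-\alpha_i)}=\nu^2,$$ and suppose there is no positive integer $k$ such that $\gamma+\beta k$ is also a root of this equation. Then, for any constant $c_0$, the series $$u(x)=c_0\sum_{n=0}^{\infty}\frac{(-1)^n x^{\gamma+\beta n}}{\displaystyle\prod_{k=1}^{n}\left(\sum_{i=1}^{m}\frac{d_i\,\Gamma(1+\gamma+\beta k)}{\Gamma(1+\gamma+\beta k-\alpha_i)}-\nu^2\right)}$$ (where the empty product for $n=0$ equals $1$) converges pointwise for every $x>0$.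
   Context: This series is the candidate fractional power series solution of the generalized fractional Bessel equation $\sum_{i=1}^{m}d_i x^{\alpha_i}D^{\alpha_i}u(x)+(x^\beta-\nu^2)u(x)=0$, $x>0$, where $D^{\alpha}$ is the Caputo derivative: for $n-1<\alpha<n$, $n\in\mathbb{N}$, $D^{\alpha}u(x)=\frac{1}{\Gamma(n-\alpha)}\int_0^x (x-t)^{n-\alpha-1}u^{(n)}(t)\,dt$, and for $\alpha=n\in\mathbb{N}$ it is the ordinary derivative $u^{(n)}$. Quotients $\Gamma(a)/\Gamma(b)$ are understood with $1/\Gamma$ as an entire function, vanishing at the nonpositive integers. *)

theory Defs
  imports "HOL-Analysis.Analysis"
begin

text \<open>Gamma quotient Gamma(a)/Gamma(b), with 1/Gamma read as the entire function rGamma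
  (vanishing at the nonpositive integers).\<close>
definition gamma_quot :: "real \<Rightarrow> real \<Rightarrow> real" where
  "gamma_quot a b = Gamma a * rGamma b"

definition char_fun :: "nat \<Rightarrow> (nat \<Rightarrow> real) \<Rightarrow> (nat \<Rightarrow> real) \<Rightarrow> real \<Rightarrow> real" where
  "char_fun m d \<alpha> s = (\<Sum>i=1..m. d i * gamma_quot (1 + s) (1 + s - \<alpha> i))"

end

theory Submission
  imports Defs "HOL-Real_Asymp.Real_Asymp"
begin

lemma Digamma_at_top: "filterlim (Digamma :: real \<Rightarrow> real) at_top at_top"
unfolding filterlim_at_top
proof (intro allI)
  fix M :: real
  have "eventually (\<lambda>n. harm n \<ge> M + euler_mascheroni) sequentially"
    using harm_at_top by (simp add: filterlim_at_top)
  then obtain n where n: "harm n \<ge> M + euler_mascheroni"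
    by (auto simp: eventually_sequentially)
  have "eventually (\<lambda>t::real. t \<ge> real (Suc n)) at_top" by (rule eventually_ge_at_top)
  then show "eventually (\<lambda>t. Digamma t \<ge> M) at_top"
  proof eventually_elim
    case (elim t)
    have "Digamma (real (Suc n)) \<le> Digamma t"
      by (rule Digamma_real_mono) (use elim in auto)
    moreover have "Digamma (real (Suc n)) = harm n - euler_mascheroni"
      using Digamma_of_nat[of n] by simp
    ultimately show ?case using n by linarith
  qed
qed

lemma lnGamma_diff_ge:
  fixes t h :: real assumes "t > 0" "h > 0"
  shows "ln_Gamma (t + h) - ln_Gamma t \<ge> h * Digamma t"
proof -
  obtain z where z: "t < z" "z < t + h" "ln_Gamma (t + h) - ln_Gamma t = (t + h - t) * Digamma z"
  proof -
    have "\<And>x. t \<le> x \<Longrightarrow> x \<le> t + h \<Longrightarrow> DERIV ln_Gamma x :> Digamma x"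
      using assms by (intro has_field_derivative_ln_Gamma_real) auto
    from MVT2[of t "t+h", OF _ this] assms show ?thesis using that by auto
  qed
  have "Digamma t \<le> Digamma z" using z assms by (intro Digamma_real_mono) auto
  then show ?thesis using z assms by (simp add: mult_left_mono)
qed

lemma lnGamma_diff_at_top:
  fixes c e :: real assumes "c < e"
  shows "filterlim (\<lambda>s. ln_Gamma (s + e) - ln_Gamma (s + c)) at_top at_top"
proof -
  have lin: "filterlim (\<lambda>s::real. s + c) at_top at_top" by real_asymp
  have "filterlim (\<lambda>s. (e - c) * Digamma (s + c)) at_top at_top"
    using assms by (intro filterlim_tendsto_pos_mult_at_top[OF tendsto_const]
       filterlim_compose[OF Digamma_at_top lin]) auto
  moreover have "eventually (\<lambda>s. (e - c) * Digamma (s + c) \<le> ln_Gamma (s + e) - ln_Gamma (s + c)) at_top"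
    using eventually_gt_at_top[of "-c"]
  proof eventually_elim
    case (elim s)
    then show ?case using lnGamma_diff_ge[of "s + c" "e - c"] assms by (simp add: algebra_simps)
  qed
  ultimately show ?thesis by (rule filterlim_at_top_mono)
qed

lemma gq_exp:
  fixes s a :: real assumes "a > 0" "s > a - 1"
  shows "gamma_quot (1 + s) (1 + s - a) = exp (ln_Gamma (1 + s) - ln_Gamma (1 + s - a))"
proof -
  have p1: "1 + s > 0" "1 + s - a > 0" using assms by auto
  show ?thesis unfolding gamma_quot_def rGamma_inverse_Gamma
    using p1 by (simp add: Gamma_real_pos_exp exp_diff divide_inverse)
qed

lemma gq_at_top:
  fixes a :: real assumes "a > 0"
  shows "filterlim (\<lambda>s. gamma_quot (1 + s) (1 + s - a)) at_top at_top"
proof -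
  have "filterlim (\<lambda>s. ln_Gamma (s + 1) - ln_Gamma (s + (1 - a))) at_top at_top"
    using assms by (intro lnGamma_diff_at_top) auto
  then have "filterlim (\<lambda>s. exp (ln_Gamma (1 + s) - ln_Gamma (1 + s - a))) at_top at_top"
    by (intro filterlim_compose[OF exp_at_top]) (simp add: algebra_simps)
  moreover have "eventually (\<lambda>s. exp (ln_Gamma (1 + s) - ln_Gamma (1 + s - a)) \<le> gamma_quot (1 + s) (1 + s - a)) at_top"
    using eventually_gt_at_top[of "a - 1"] by eventually_elim (use gq_exp assms in auto)
  ultimately show ?thesis by (rule filterlim_at_top_mono)
qed

lemma gq_ratio:
  fixes a b :: real assumes "0 < a" "a < b"
  shows "((\<lambda>s. gamma_quot (1 + s) (1 + s - a) / gamma_quot (1 + s) (1 + s - b)) \<longlongrightarrow> 0) at_top"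
proof -
  have "filterlim (\<lambda>s. ln_Gamma (s + (1 - a)) - ln_Gamma (s + (1 - b))) at_top at_top"
    using assms by (intro lnGamma_diff_at_top) auto
  then have "filterlim (\<lambda>s. - (ln_Gamma (s + (1 - a)) - ln_Gamma (s + (1 - b)))) at_bot at_top"
    by (simp add: filterlim_uminus_at_top)
  then have "((\<lambda>s. exp (- (ln_Gamma (s + (1 - a)) - ln_Gamma (s + (1 - b))))) \<longlongrightarrow> 0) at_top"
    by (intro filterlim_compose[OF exp_at_bot])
  moreover have "eventually (\<lambda>s. exp (- (ln_Gamma (s + (1 - a)) - ln_Gamma (s + (1 - b)))) =
      gamma_quot (1 + s) (1 + s - a) / gamma_quot (1 + s) (1 + s - b)) at_top"
    using eventually_gt_at_top[of "b - 1"]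
  proof eventually_elim
    case (elim s)
    then show ?case using gq_exp[of a s] gq_exp[of b s] assms
      by (simp add: exp_diff[symmetric] exp_minus[symmetric] exp_add[symmetric] divide_inverse add_diff_eq add.commute)
  qed
  ultimately show ?thesis by (rule Lim_transform_eventually)
qed


lemma sum_gq_at_top:
  fixes I :: "nat set" and w \<alpha> :: "nat \<Rightarrow> real"
  assumes fin: "finite I" and pos: "\<forall>i\<in>I. \<alpha> i > 0"
  shows "(\<forall>s. (\<Sum>i\<in>I. w i * gamma_quot (1 + s) (1 + s - \<alpha> i)) = 0) \<or>
         filterlim (\<lambda>s. \<bar>\<Sum>i\<in>I. w i * gamma_quot (1 + s) (1 + s - \<alpha> i)\<bar>) at_top at_top"
proof -
  define g where "g s a = gamma_quot (1 + s) (1 + s - a)" for s a :: real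
  define A where "A = \<alpha> ` I"
  define D where "D a = (\<Sum>i\<in>{i\<in>I. \<alpha> i = a}. w i)" for a
  define B where "B = {a\<in>A. D a \<noteq> 0}"
  have finA: "finite A" using fin by (simp add: A_def)
  have finB: "finite B" using finA by (simp add: B_def)
  have Apos: "\<forall>a\<in>A. a > 0" using pos by (auto simp: A_def)
  have eq1: "(\<Sum>i\<in>I. w i * g s (\<alpha> i)) = (\<Sum>a\<in>B. D a * g s a)" for s
  proof -
    have "(\<Sum>i\<in>I. w i * g s (\<alpha> i)) = (\<Sum>a\<in>A. \<Sum>i\<in>{i\<in>I. \<alpha> i = a}. w i * g s (\<alpha> i))"
      unfolding A_def by (rule sum.image_gen[OF fin])
    also have "\<dots> = (\<Sum>a\<in>A. D a * g s a)"
      unfolding D_def sum_distrib_right by (intro sum.cong refl) auto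
    also have "\<dots> = (\<Sum>a\<in>B. D a * g s a)"
      unfolding B_def by (rule sum.mono_neutral_right[OF finA]) auto
    finally show ?thesis .
  qed
  show ?thesis
  proof (cases "B = {}")
    case True
    then show ?thesis using eq1 unfolding g_def by simp
  next
    case False
    define a where "a = Max B"
    have aB: "a \<in> B" using False finB by (simp add: a_def)
    have apos: "a > 0" using aB Apos by (auto simp: B_def)
    have Da: "D a \<noteq> 0" using aB by (auto simp: B_def)
    have lt: "b < a" if "b \<in> B - {a}" for b
    proof -
      have "b \<le> a" using that Max_ge[OF finB, of b] by (auto simp: a_def)
      then show ?thesis using that by auto
    qed
    have bpos: "b > 0" if "b \<in> B - {a}" for b using that Apos by (auto simp: B_def)
    have ga: "filterlim (\<lambda>s. g s a) at_top at_top" unfolding g_def using gq_at_top[OF apos] .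
    define H where "H s = D a + (\<Sum>b\<in>B - {a}. D b * (g s b / g s a))" for s
    have "(H \<longlongrightarrow> D a + (\<Sum>b\<in>B - {a}. D b * 0)) at_top"
      unfolding H_def g_def
      by (intro tendsto_intros gq_ratio) (auto intro: lt bpos)
    then have H: "(H \<longlongrightarrow> D a) at_top" by simp
    then have Habs: "((\<lambda>s. \<bar>H s\<bar>) \<longlongrightarrow> \<bar>D a\<bar>) at_top" by (rule tendsto_rabs)
    have "filterlim (\<lambda>s. \<bar>H s\<bar> * g s a) at_top at_top"
      by (rule filterlim_tendsto_pos_mult_at_top[OF Habs _ ga]) (use Da in simp)
    moreover have "eventually (\<lambda>s. \<bar>H s\<bar> * g s a \<le> \<bar>\<Sum>i\<in>I. w i * g s (\<alpha> i)\<bar>) at_top"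
      using ga[unfolded filterlim_at_top, rule_format, of 1]
    proof eventually_elim
      case (elim s)
      have "(\<Sum>b\<in>B. D b * g s b) = D a * g s a + (\<Sum>b\<in>B - {a}. D b * g s b)"
        using aB finB by (simp add: sum.remove)
      also have "\<dots> = H s * g s a"
        using elim unfolding H_def by (simp add: algebra_simps sum_distrib_left sum_distrib_right)
      finally show ?case using elim eq1[of s] by (simp add: abs_mult)
    qed
    ultimately have "filterlim (\<lambda>s. \<bar>\<Sum>i\<in>I. w i * g s (\<alpha> i)\<bar>) at_top at_top"
      by (rule filterlim_at_top_mono)
    then show ?thesis unfolding g_def by simp
  qed
qed

theorem lemma2p1:
  fixes m :: nat and d \<alpha> :: "nat \<Rightarrow> real" and \<beta> \<nu> \<gamma> c0 x :: real
  assumes "\<forall>i\<in>{1..m}. \<alpha> i > 0"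
    and "\<beta> > 0"
    and "char_fun m d \<alpha> \<gamma> = \<nu>\<^sup>2"
    and "\<not> (\<exists>k::nat. k \<ge> 1 \<and> char_fun m d \<alpha> (\<gamma> + \<beta> * real k) = \<nu>\<^sup>2)"
    and "x > 0"
  shows "summable (\<lambda>n::nat. c0 * ((-1) ^ n * x powr (\<gamma> + \<beta> * real n)
            / (\<Prod>k=1..n. char_fun m d \<alpha> (\<gamma> + \<beta> * real k) - \<nu>\<^sup>2)))"
proof -
  let ?P = "\<lambda>k::nat. char_fun m d \<alpha> (\<gamma> + \<beta> * real k) - \<nu>\<^sup>2"
  let ?f = "\<lambda>n::nat. c0 * ((-1) ^ n * x powr (\<gamma> + \<beta> * real n)
            / (\<Prod>k=1..n. char_fun m d \<alpha> (\<gamma> + \<beta> * real k) - \<nu>\<^sup>2))"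
  have cf: "char_fun m d \<alpha> = (\<lambda>s. \<Sum>i\<in>{1..m}. d i * gamma_quot (1 + s) (1 + s - \<alpha> i))"
    by (auto simp: char_fun_def fun_eq_iff)
  have lim: "filterlim (\<lambda>s. \<bar>char_fun m d \<alpha> s\<bar>) at_top at_top"
  proof -
    from sum_gq_at_top[of "{1..m}" \<alpha> d] assms(1)
    have "(\<forall>s. char_fun m d \<alpha> s = 0) \<or> filterlim (\<lambda>s. \<bar>char_fun m d \<alpha> s\<bar>) at_top at_top"
      unfolding cf by simp
    moreover have "\<not> (\<forall>s. char_fun m d \<alpha> s = 0)"
    proof
      assume z: "\<forall>s. char_fun m d \<alpha> s = 0"
      then have "\<nu>\<^sup>2 = 0" using assms(3) by simp
      then have "char_fun m d \<alpha> (\<gamma> + \<beta> * real (1::nat)) = \<nu>\<^sup>2" using z by simp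
      then show False using assms(4) by blast
    qed
    ultimately show ?thesis by blast
  qed
  have seq: "filterlim (\<lambda>k::nat. \<gamma> + \<beta> * real k) at_top sequentially"
    using assms(2) by real_asymp
  have "filterlim (\<lambda>k. \<bar>char_fun m d \<alpha> (\<gamma> + \<beta> * real k)\<bar>) at_top sequentially"
    by (rule filterlim_compose[OF lim seq])
  then have "eventually (\<lambda>k. \<bar>char_fun m d \<alpha> (\<gamma> + \<beta> * real k)\<bar> \<ge> 2 * x powr \<beta> + \<nu>\<^sup>2) sequentially"
    by (simp add: filterlim_at_top)
  then obtain N where N: "\<And>k. k \<ge> N \<Longrightarrow> \<bar>char_fun m d \<alpha> (\<gamma> + \<beta> * real k)\<bar> \<ge> 2 * x powr \<beta> + \<nu>\<^sup>2"
    by (auto simp: eventually_sequentially)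
  have Pbig: "\<bar>?P k\<bar> \<ge> 2 * x powr \<beta>" if "k \<ge> N" for k
    using N[OF that] zero_le_power2[of \<nu>] by linarith
  show ?thesis
  proof (rule summable_ratio_test[of "1/2" N])
    fix n assume n: "n \<ge> N"
    have xb: "x powr \<beta> > 0" using assms(5) by simp
    have PS: "\<bar>?P (Suc n)\<bar> \<ge> 2 * x powr \<beta>" using Pbig[of "Suc n"] n by linarith
    then have Pnz: "\<bar>?P (Suc n)\<bar> > 0" using xb by linarith
    have q: "x powr \<beta> / \<bar>?P (Suc n)\<bar> \<le> 1/2"
      using PS Pnz by (simp add: divide_simps)
    have pr: "(\<Prod>k=1..Suc n. ?P k) = ?P (Suc n) * (\<Prod>k=1..n. ?P k)"
      by (simp add: prod.nat_ivl_Suc')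
    have pw: "x powr (\<gamma> + \<beta> * real (Suc n)) = x powr (\<gamma> + \<beta> * real n) * x powr \<beta>"
      by (simp add: powr_add[symmetric] algebra_simps)
    have "norm (?f (Suc n)) = norm (?f n) * (x powr \<beta> / \<bar>?P (Suc n)\<bar>)"
    proof -
      have gen: "\<bar>c * ((-1) ^ Suc n * (X * y) / (p * Q))\<bar> = \<bar>c * ((-1) ^ n * X / Q)\<bar> * (y / \<bar>p\<bar>)"
        if "y > 0" for c X y p Q :: real
        using that by (simp add: abs_mult abs_divide mult.commute mult.assoc)
      show ?thesis unfolding pr pw real_norm_def by (rule gen[OF xb])
    qed
    also have "\<dots> \<le> norm (?f n) * (1/2)"
      by (rule mult_left_mono[OF q]) simp
    finally show "norm (?f (Suc n)) \<le> 1/2 * norm (?f n)" by simp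
  qed simp
qed

end
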